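(* Let $p$ be a prime number and let $H=p\mathbb Z_{p^2}\times p\mathbb Z_{p^2}=\{(pj,pk):j,k\in\mathbb Z\}\subseteq\mathbb Z_{p^2}\times\mathbb Z_{p^2}$ (the unique non-cyclic Lagrangian of $\mathbb Z_{p^2}\times\mathbb Z_{p^2}$). If $A\subseteq\mathbb Z_{p^2}\times\mathbb Z_{p^2}$ complements $H$, i.e. $\{A+h\}_{h\in H}$ is a partition of $\mathbb Z_{p^2}\times\mathbb Z_{p^2}$, then $$\Delta A\cap Z(\widehat{\mathbf 1}_A^{sym})=\emptyset.$$
   Context: Here $n=p^2$. For $x=(x_1,x_2),y=(y_1,y_2)\in\mathbb Z_n\times\mathbb Z_n$ the symplectic form is $\langle x,y\rangle_s=x_1y_2-x_2y_1$. For $A\subseteq\mathbb Z_n\times\mathbb Z_n$, $\widehat{\mathbf 1}_A^{sym}(\xi)=\sum_{a\in A}e^{\frac{2\pi i}{n}\langle a,\xi\rangle_s}$ and $Z(\widehat{\mathbf 1}_A^{sym})=\{\xi:\widehat{\mathbf 1}_A^{sym}(\xi)=0\}$. The difference set is $\Delta A=\{a-a':a,a'\in A,\ a\neq a'\}$. A Lagrangian is a subset $H$ with $H=H^{\perp_s}$, where $H^{\perp_s}=\{g:\langle g,h\rangle_s=0\ \forall h\in H\}$; Lagrangians are exactly the subgroups of order $n$, and the only non-cyclic one in $\mathbb Z_{p^2}\times\mathbb Z_{p^2}$ is $p\mathbb Z_{p^2}\times p\mathbb Z_{p^2}$. *)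

theory Defs
  imports "HOL-Analysis.Analysis"
begin

definition ZnZn :: "int \<Rightarrow> (int \<times> int) set" where
  "ZnZn n = {0..<n} \<times> {0..<n}"

definition zadd :: "int \<Rightarrow> int \<times> int \<Rightarrow> int \<times> int \<Rightarrow> int \<times> int" where
  "zadd n x y = ((fst x + fst y) mod n, (snd x + snd y) mod n)"

definition zsub :: "int \<Rightarrow> int \<times> int \<Rightarrow> int \<times> int \<Rightarrow> int \<times> int" where
  "zsub n x y = ((fst x - fst y) mod n, (snd x - snd y) mod n)"

text \<open>Symplectic form x1 y2 - x2 y1 (its value is only relevant modulo n).\<close>
definition symp :: "int \<times> int \<Rightarrow> int \<times> int \<Rightarrow> int" where
  "symp x y = fst x * snd y - snd x * fst y"

definition sym_ft :: "int \<Rightarrow> (int \<times> int) set \<Rightarrow> int \<times> int \<Rightarrow> complex" where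
  "sym_ft n A \<xi> = (\<Sum>a\<in>A. exp (2 * pi * \<i> * of_int (symp a \<xi>) / of_int n))"

definition zero_set :: "int \<Rightarrow> (int \<times> int) set \<Rightarrow> (int \<times> int) set" where
  "zero_set n A = {\<xi> \<in> ZnZn n. sym_ft n A \<xi> = 0}"

definition diff_set :: "int \<Rightarrow> (int \<times> int) set \<Rightarrow> (int \<times> int) set" where
  "diff_set n A = {zsub n a a' | a a'. a \<in> A \<and> a' \<in> A \<and> a \<noteq> a'}"

definition complements :: "int \<Rightarrow> (int \<times> int) set \<Rightarrow> (int \<times> int) set \<Rightarrow> bool" where
  "complements n A H \<longleftrightarrow> A \<subseteq> ZnZn n \<and>
     (\<forall>g \<in> ZnZn n. \<exists>!ah. ah \<in> A \<times> H \<and> g = zadd n (fst ah) (snd ah))"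

definition pH :: "int \<Rightarrow> (int \<times> int) set" where
  "pH p = {(p * j, p * k) | j k. 0 \<le> j \<and> j < p \<and> 0 \<le> k \<and> k < p}"

end

theory Submission
  imports Defs "HOL-Computational_Algebra.Computational_Algebra"
begin


abbreviation mi :: "int poly \<Rightarrow> complex poly" where "mi \<equiv> map_poly of_int"

lemma mi_add: "mi (a + b) = mi a + mi b"
  by (rule poly_eqI) (simp add: coeff_map_poly)
lemma mi_diff: "mi (a - b) = mi a - mi b"
  by (rule poly_eqI) (simp add: coeff_map_poly)
lemma mi_mult: "mi (a * b) = mi a * mi b"
  by (rule poly_eqI) (simp add: coeff_map_poly coeff_mult)
lemma mi_smult: "mi (smult c b) = smult (of_int c) (mi b)"
  by (rule poly_eqI) (simp add: coeff_map_poly)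
lemma mi_1: "mi 1 = 1"
  by simp
lemma mi_sum: "mi (sum f A) = sum (\<lambda>i. mi (f i)) A"
  by (induction A rule: infinite_finite_induct) (auto simp: mi_add)
lemma mi_power: "mi (a ^ n) = mi a ^ n"
  by (induction n) (auto simp: mi_mult)
lemma mi_monom: "mi (monom c n) = monom (of_int c) n"
  by (simp add: map_poly_monom)

lemma frob:
  fixes a b :: "'a::comm_ring_1"
  assumes "prime (P::nat)"
  shows "\<exists>c. (a + b) ^ P = a ^ P + b ^ P + of_nat P * c"
proof -
  have P1: "P > 0" using assms prime_gt_0_nat by blast
  have "(a + b) ^ P = (\<Sum>k\<le>P. of_nat (P choose k) * a ^ k * b ^ (P - k))"
    by (rule binomial_ring)
  also have "{..P} = insert P (insert 0 {1..<P})" using P1 by auto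
  also have "(\<Sum>k\<in>insert P (insert 0 {1..<P}). of_nat (P choose k) * a ^ k * b ^ (P - k))
     = a ^ P + b ^ P + (\<Sum>k\<in>{1..<P}. of_nat (P choose k) * a ^ k * b ^ (P - k))"
    using P1 by (simp add: algebra_simps)
  also have "(\<Sum>k\<in>{1..<P}. of_nat (P choose k) * a ^ k * b ^ (P - k))
     = of_nat P * (\<Sum>k\<in>{1..<P}. of_nat ((P choose k) div P) * a ^ k * b ^ (P - k))"
    unfolding sum_distrib_left
  proof (rule sum.cong)
    fix k assume k: "k \<in> {1..<P}"
    have "P dvd (P choose k)" using k assms by (intro dvd_choose_prime) auto
    then have "P choose k = P * ((P choose k) div P)" by simp
    then have "(of_nat (P choose k) :: 'a) = of_nat P * of_nat ((P choose k) div P)"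
      by (metis of_nat_mult)
    then show "of_nat (P choose k) * a ^ k * b ^ (P - k) =
         of_nat P * (of_nat ((P choose k) div P) * a ^ k * b ^ (P - k))"
      by (simp add: mult.assoc)
  qed simp
  finally show ?thesis by blast
qed


lemma eisen_aux:
  fixes G g h :: "int poly" and q :: int
  assumes q: "prime q" and GN: "degree G = N" and lc: "lead_coeff G = 1"
    and dv: "\<And>i. i < N \<Longrightarrow> q dvd coeff G i"
    and Ggh: "G = g * h" and hpos: "degree h > 0"
    and g0: "q dvd coeff g 0" and h0: "\<not> q dvd coeff h 0"
  shows False
proof -
  have nz: "g \<noteq> 0" "h \<noteq> 0" using Ggh lc by auto
  have degG: "degree G = degree g + degree h" using Ggh nz by (simp add: degree_mult_eq)
  have "lead_coeff g * lead_coeff h = 1" using Ggh lc by (simp add: lead_coeff_mult)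
  then have "is_unit (lead_coeff g)" by (metis dvd_triv_left)
  then have nl: "\<not> q dvd lead_coeff g" using q
    by (meson dvd_unit_imp_unit not_prime_unit)
  define r where "r = (LEAST i. \<not> q dvd coeff g i)"
  have r1: "\<not> q dvd coeff g r" unfolding r_def by (rule LeastI[of _ "degree g"]) (rule nl)
  have r2: "r \<le> degree g" unfolding r_def by (rule Least_le) (rule nl)
  have r3: "\<And>i. i < r \<Longrightarrow> q dvd coeff g i" unfolding r_def using not_less_Least by blast
  have rN: "r < N" using r2 degG GN hpos by linarith
  have "coeff G r = (\<Sum>i\<le>r. coeff g i * coeff h (r - i))" using Ggh by (simp add: coeff_mult)
  also have "\<dots> = (\<Sum>i<r. coeff g i * coeff h (r - i)) + coeff g r * coeff h 0"
    by (simp add: lessThan_Suc_atMost[symmetric])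
  finally have eq: "coeff G r = (\<Sum>i<r. coeff g i * coeff h (r - i)) + coeff g r * coeff h 0" .
  have "q dvd (\<Sum>i<r. coeff g i * coeff h (r - i))"
    by (rule dvd_sum) (simp add: r3)
  moreover have "q dvd coeff G r" using dv rN by blast
  ultimately have "q dvd coeff g r * coeff h 0" using eq by (metis dvd_add_right_iff)
  then show False using q r1 h0 by (simp add: prime_dvd_mult_iff)
qed

lemma eisen:
  fixes G g h :: "int poly" and q :: int
  assumes q: "prime q" and GN: "degree G = N" and lc: "lead_coeff G = 1"
    and dv: "\<And>i. i < N \<Longrightarrow> q dvd coeff G i"
    and nd: "\<not> q^2 dvd coeff G 0"
    and Ggh: "G = g * h"
  shows "degree g = 0 \<or> degree h = 0"
proof (rule ccontr)
  assume a: "\<not> (degree g = 0 \<or> degree h = 0)"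
  have c0: "coeff G 0 = coeff g 0 * coeff h 0" using Ggh by (simp add: coeff_mult)
  have "g \<noteq> 0" "h \<noteq> 0" using Ggh lc by auto
  then have "degree G = degree g + degree h" using Ggh by (simp add: degree_mult_eq)
  then have "0 < N" using a GN by simp
  then have "q dvd coeff G 0" using dv by blast
  then have "q dvd coeff g 0 \<or> q dvd coeff h 0" using c0 q by (simp add: prime_dvd_mult_iff)
  moreover have "\<not> (q dvd coeff g 0 \<and> q dvd coeff h 0)"
  proof
    assume "q dvd coeff g 0 \<and> q dvd coeff h 0"
    then have "q*q dvd coeff g 0 * coeff h 0" by (simp add: mult_dvd_mono)
    then show False using nd c0 by (simp add: power2_eq_square)
  qed
  ultimately show False
  proof (elim disjE)
    assume "q dvd coeff g 0"
    then show False using eisen_aux[OF q GN lc dv Ggh] a \<open>\<not> (q dvd coeff g 0 \<and> q dvd coeff h 0)\<close> by auto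
  next
    assume "q dvd coeff h 0"
    then show False using eisen_aux[OF q GN lc dv, of h g] Ggh a \<open>\<not> (q dvd coeff g 0 \<and> q dvd coeff h 0)\<close>
      by (auto simp: mult.commute)
  qed
qed


definition GG :: "nat \<Rightarrow> int poly" where
  "GG P = (\<Sum>k<P. ([:1,1:] ^ P) ^ k)"

lemma G1: "GG P * ([:1,1:] ^ P - 1) = [:1,1:] ^ (P^2) - 1"
  unfolding GG_def using power_diff_1_eq[of "[:1,1:]^P :: int poly" P]
  by (simp add: power_mult[symmetric] power2_eq_square mult.commute)

lemma degYm1: "n > 0 \<Longrightarrow> degree ([:1,1:] ^ n - (1::int poly)) = n \<and> lead_coeff ([:1,1:] ^ n - (1::int poly)) = 1"
proof -
  assume n: "n > 0"
  have c: "coeff ([:1,1:] ^ n - (1::int poly)) n = 1"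
    using n lead_coeff_power[of "[:1,1::int:]" n] degree_linear_power[of "1::int" n]
    by (simp add: coeff_1)
  have "degree ([:1,1:] ^ n - (1::int poly)) \<le> n"
    by (rule degree_diff_le) (simp_all add: degree_linear_power)
  moreover have "n \<le> degree ([:1,1:] ^ n - (1::int poly))" using c by (intro le_degree) simp
  ultimately show ?thesis using c by simp
qed

lemma G6:
  assumes "P > 0"
  shows "degree (GG P) = P^2 - P" "lead_coeff (GG P) = 1"
proof -
  have nz: "[:1,1:] ^ (P^2) - (1::int poly) \<noteq> 0"
    using degYm1[of "P^2"] assms by auto
  have "GG P \<noteq> 0" using G1[of P] nz by auto
  moreover have "[:1,1:] ^ P - (1::int poly) \<noteq> 0" using degYm1[of P] assms by auto
  ultimately have "degree (GG P) + P = P^2" "lead_coeff (GG P) = 1"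
    using G1[of P] degYm1[of P] degYm1[of "P^2"] assms
    by (metis degree_mult_eq zero_less_power, metis lead_coeff_mult mult.right_neutral zero_less_power)
  then show "degree (GG P) = P^2 - P" "lead_coeff (GG P) = 1" by auto
qed

lemma G7: "coeff (GG P) 0 = int P"
  by (simp add: GG_def poly_0_coeff_0[symmetric] poly_sum)

lemma ring_aux:
  fixes G Yp YPP xp xpp c U T :: "'a::comm_ring_1"
  assumes "G * (Yp - 1) = YPP - 1" "Yp = xp + 1 + c * U" "YPP = xpp + 1 + c * T"
  shows "G * xp = xpp + c * (T - G * U)"
proof -
  have "G * (xp + c * U) = xpp + c * T" using assms by simp
  then show ?thesis by (simp add: algebra_simps)
qed

lemma G4:
  assumes "prime P"
  shows "\<exists>W. GG P * [:0,1:] ^ P = [:0,1:] ^ (P^2) + of_nat P * W"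
proof -
  have Y: "[:1,1:] = [:0,1:] + (1::int poly)" by (simp add: one_pCons)
  obtain U where U: "([:0,1:] + (1::int poly)) ^ P = [:0,1:]^P + 1 ^ P + of_nat P * U"
    using frob[OF assms] by blast
  obtain V where V: "([:0,1:]^P + (1::int poly) + of_nat P * U) ^ P =
     ([:0,1:]^P + 1) ^ P + (of_nat P * U) ^ P + of_nat P * V"
    using frob[OF assms] by blast
  obtain V2 where V2: "([:0,1:]^P + (1::int poly)) ^ P = ([:0,1:]^P)^P + 1 ^ P + of_nat P * V2"
    using frob[OF assms] by blast
  have P0: "P > 0" using assms prime_gt_0_nat by blast
  have pp: "(of_nat P * U) ^ P = of_nat P * (of_nat P ^ (P - 1) * U ^ P)"
  proof -
    obtain k where k: "P = Suc k" using P0 by (cases P) auto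
    show ?thesis unfolding power_mult_distrib by (simp add: k mult_ac)
  qed
  have YP: "[:1,1:] ^ P = [:0,1:]^P + 1 + of_nat P * U" unfolding Y U by simp
  have YPP: "[:1,1:] ^ (P^2) = [:0,1:]^(P^2) + 1 + of_nat P * (V2 + of_nat P ^ (P - 1) * U ^ P + V)"
  proof -
    have "[:1,1:] ^ (P^2) = ([:1,1:] ^ P) ^ P" by (simp add: power2_eq_square power_mult)
    also have "\<dots> = ([:0,1:]^P + 1 + of_nat P * U) ^ P" using YP by simp
    also have "\<dots> = ([:0,1:]^P)^P + 1 + of_nat P * V2 + of_nat P * (of_nat P ^ (P - 1) * U ^ P) + of_nat P * V"
      unfolding V V2 pp by simp
    also have "\<dots> = [:0,1:]^(P^2) + 1 + of_nat P * (V2 + of_nat P ^ (P - 1) * U ^ P + V)"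
      by (simp add: power2_eq_square power_mult distrib_left)
    finally show ?thesis .
  qed
  show ?thesis using ring_aux[OF G1 YP YPP] by blast
qed


lemma G5:
  assumes "prime P" "i < P^2 - P"
  shows "int P dvd coeff (GG P) i"
proof -
  obtain W where W: "GG P * [:0,1:] ^ P = [:0,1:] ^ (P^2) + of_nat P * W"
    using G4[OF assms(1)] by blast
  have "coeff (GG P * [:0,1:] ^ P) (i + P) = coeff (GG P) i"
    using coeff_monom_mult[of 1 P "GG P" "i+P"] by (simp add: monom_altdef mult.commute)
  moreover have "coeff ([:0,1:] ^ (P^2) :: int poly) (i + P) = 0"
    using coeff_monom[of "1::int" "P^2" "i+P"] assms(2) by (simp add: monom_altdef)
  moreover have "coeff (of_nat P * W) (i + P) = int P * coeff W (i+P)"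
    by (simp add: of_nat_poly)
  ultimately have "coeff (GG P) i = int P * coeff W (i+P)" using W by (metis coeff_add add_0)
  then show ?thesis by simp
qed

definition om :: "nat \<Rightarrow> complex" where "om n = exp (2 * pi * \<i> / of_nat n)"

lemma om_pow: "n > 0 \<Longrightarrow> om (n * m) ^ n = om m"
  unfolding om_def exp_of_nat_mult[symmetric] by (simp add: field_simps)

lemma om_pow_self: "m > 0 \<Longrightarrow> om m ^ m = 1"
  unfolding om_def exp_of_nat_mult[symmetric] by (simp add: field_simps)

lemma om_ne1: "m > 1 \<Longrightarrow> om m \<noteq> 1"
proof
  assume m: "m > 1" and e: "om m = 1"
  then obtain n :: int where n: "2 * pi * \<i> / of_nat m = 2 * pi * of_int n * \<i>"
    unfolding om_def exp_eq_1 by (auto simp: complex_eq_iff)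
  then have "1 / real m = of_int n" using pi_gt_zero m
    by (simp add: complex_eq_iff field_simps)
  moreover have "0 < 1 / real m" "1 / real m < 1" using m by auto
  ultimately have "0 < real_of_int n" "real_of_int n < 1" by auto
  then have "0 < n" "n < 1" by simp_all
  then show False by linarith
qed

lemma mi_Y: "mi [:1,1:] = [:1,1:]"
  by (rule poly_eqI) (simp add: coeff_map_poly coeff_pCons split: nat.split)

lemma G_root:
  assumes "P > 1"
  shows "poly (mi (GG P)) (om (P^2) - 1) = 0"
proof -
  have "poly (mi (GG P)) (om (P^2) - 1) = (\<Sum>k<P. (om (P^2) ^ P) ^ k)"
    by (simp add: GG_def mi_sum mi_power poly_sum mi_Y)
  also have "om (P^2) ^ P = om P" using om_pow[of P P] assms by (simp add: power2_eq_square)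
  also have "(\<Sum>k<P. om P ^ k) = 0"
  proof -
    have "om P ^ P - 1 = (om P - 1) * (\<Sum>k<P. om P ^ k)" by (rule power_diff_1_eq)
    then show ?thesis using om_pow_self[of P] om_ne1[of P] assms by simp
  qed
  finally show ?thesis .
qed


lemma poly_mi_const: "degree r = 0 \<Longrightarrow> poly (mi r) x = of_int (coeff r 0)"
  by (elim degree_eq_zeroE) (simp add: map_poly_pCons)

lemma poly_mi_smult: "poly (mi (smult c r)) x = of_int c * poly (mi r) x"
  by (simp add: mi_smult)

lemma minpoly:
  fixes \<beta> :: complex
  assumes P: "prime P" and root: "poly (mi (GG P)) \<beta> = 0"
    and r: "r \<noteq> 0" "poly (mi r) \<beta> = 0"
  shows "P^2 - P \<le> degree r"
proof -
  define S where "S r \<longleftrightarrow> r \<noteq> 0 \<and> poly (mi r) \<beta> = 0" for r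
  have P0: "P > 0" "P > 1" using P prime_gt_1_nat[of P] by auto
  have Gd: "degree (GG P) = P^2 - P" "lead_coeff (GG P) = 1" using G6 P0 by auto
  have GS: "S (GG P)" using root Gd unfolding S_def by auto
  obtain m where m: "S m" "\<And>y. S y \<Longrightarrow> degree m \<le> degree y"
    using ex_has_least_nat[of S "GG P" degree] GS by blast
  define m0 where "m0 = primitive_part m"
  have mnz: "m \<noteq> 0" using m S_def by auto
  have cm: "Polynomial.content m \<noteq> 0" using mnz by simp
  have meq: "m = smult (Polynomial.content m) m0" unfolding m0_def by simp
  have m0root: "poly (mi m0) \<beta> = 0"
  proof -
    have "poly (mi m) \<beta> = of_int (Polynomial.content m) * poly (mi m0) \<beta>"
      using poly_mi_smult[of "Polynomial.content m" m0 \<beta>] unfolding meq[symmetric] .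
    then show ?thesis using m(1) cm unfolding S_def by simp
  qed
  have m0nz: "m0 \<noteq> 0" using meq mnz by auto
  have dm0: "degree m0 = degree m" unfolding m0_def by simp
  have cm0: "Polynomial.content m0 = 1" unfolding m0_def using mnz by simp
  obtain a q where aq: "a \<noteq> 0" "smult a (GG P) = m0 * q + pseudo_mod (GG P) m0"
    using pseudo_mod(1)[OF m0nz, of "GG P"] by blast
  have rr: "pseudo_mod (GG P) m0 = 0 \<or> degree (pseudo_mod (GG P) m0) < degree m0"
    using pseudo_mod(2)[OF m0nz] by blast
  have "mi (pseudo_mod (GG P) m0) = smult (of_int a) (mi (GG P)) - mi m0 * mi q"
    using arg_cong[OF aq(2), of mi] by (simp add: mi_smult mi_add mi_mult)
  then have "poly (mi (pseudo_mod (GG P) m0)) \<beta> = 0" using root m0root by simp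
  then have "pseudo_mod (GG P) m0 = 0" using rr m(2)[of "pseudo_mod (GG P) m0"] dm0
    unfolding S_def by force
  then have aq2: "smult a (GG P) = m0 * q" using aq by simp
  have cG: "Polynomial.content (GG P) = 1"
  proof -
    have "Polynomial.content (GG P) dvd 1"
      using content_dvd_coeff[of "GG P" "degree (GG P)", unfolded Gd(2)] .
    then show ?thesis by (metis is_unit_normalize normalize_content)
  qed
  have cq: "Polynomial.content q = normalize a"
    using arg_cong[OF aq2, of Polynomial.content] by (simp add: content_mult cm0 cG)
  define q' where "q' = smult (sgn a) (primitive_part q)"
  have "smult a (m0 * q') = smult (a * sgn a) (m0 * primitive_part q)"
    unfolding q'_def by (simp add: mult_ac)
  also have "a * sgn a = Polynomial.content q" using cq by (simp add: sgn_mult_abs abs_sgn mult.commute)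
  also have "smult (Polynomial.content q) (m0 * primitive_part q) = m0 * q"
    by (metis content_times_primitive_part mult_smult_right)
  finally have Gm: "GG P = m0 * q'" using aq2 aq(1) by (metis smult_cancel)
  have ip: "prime (int P)" using P by simp
  have nd: "\<not> (int P)^2 dvd coeff (GG P) 0"
  proof
    assume "(int P)^2 dvd coeff (GG P) 0"
    then have "P^2 dvd P" using G7[of P] by (metis of_nat_dvd_iff of_nat_power)
    then have "P^2 \<le> P" using P0 by (simp add: dvd_imp_le)
    then show False using P0 by (simp add: power2_eq_square)
  qed
  have "degree m0 = 0 \<or> degree q' = 0"
    by (rule eisen[OF ip Gd(1) Gd(2) _ nd Gm]) (rule G5[OF P], assumption)
  moreover have "degree m0 \<noteq> 0"
  proof
    assume "degree m0 = 0"
    then have "poly (mi m0) \<beta> = of_int (coeff m0 0)" by (rule poly_mi_const)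
    moreover have "coeff m0 0 \<noteq> 0" using m0nz \<open>degree m0 = 0\<close> by (metis leading_coeff_0_iff)
    ultimately show False using m0root by simp
  qed
  ultimately have "degree q' = 0" by blast
  moreover have "q' \<noteq> 0" using Gm Gd by auto
  ultimately have "degree (GG P) = degree m0" using Gm m0nz by (simp add: degree_mult_eq)
  then have "degree m = P^2 - P" using dm0 Gd by simp
  then show ?thesis using m(2)[of r] r S_def by auto
qed


lemma pcompose_monom': "pcompose (monom c n) q = smult c (q ^ n)"
  by (induction n) (simp_all add: monom_0 monom_Suc pcompose_pCons)

lemma coeff_rsum: "coeff (\<Sum>j<N. monom (f j) j) i = (if i < N then f i else 0)"
  by (simp add: coeff_sum coeff_monom)

lemma LI:
  assumes P: "prime P"
    and s: "(\<Sum>j<P^2-P. of_int (f j) * om (P^2) ^ j) = (0::complex)"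
    and j: "j < P^2 - P"
  shows "f j = 0"
proof -
  define N where "N = P^2 - P"
  define r where "r = (\<Sum>j<N. monom (f j) j)"
  have P1: "P > 1" using P prime_gt_1_nat[of P] by auto
  have "r = 0"
  proof (rule ccontr)
    assume rnz: "r \<noteq> 0"
    define r' where "r' = pcompose r [:1,1:]"
    have r'eq: "r' = (\<Sum>j<N. smult (f j) ([:1,1:] ^ j))"
      unfolding r'_def r_def by (simp add: pcompose_sum pcompose_monom')
    have "poly (mi r') (om (P^2) - 1) = (\<Sum>j<N. of_int (f j) * om (P^2) ^ j)"
      unfolding r'eq by (simp add: mi_sum mi_smult mi_power mi_Y poly_sum)
    then have root: "poly (mi r') (om (P^2) - 1) = 0" using s unfolding N_def by simp
    have "r' \<noteq> 0" unfolding r'_def using rnz pcompose_eq_0[of r "[:1,1::int:]"] by auto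
    then have "P^2 - P \<le> degree r'" using minpoly[OF P G_root[OF P1] _ root] by blast
    moreover have "degree r' = degree r" unfolding r'_def by (simp add: degree_pcompose)
    moreover have "degree r \<le> N - 1"
      by (rule degree_le) (auto simp: r_def coeff_rsum)
    moreover have "N > 0"
    proof -
      have "P * 1 < P * P" using P1 by (intro mult_strict_left_mono) auto
      then show ?thesis unfolding N_def by (simp add: power2_eq_square)
    qed
    ultimately show False unfolding N_def by linarith
  qed
  then have "coeff r j = 0" by simp
  then show ?thesis using j unfolding r_def N_def coeff_rsum by simp
qed


lemma sum_pairs: fixes P M :: nat shows "(\<Sum>j<P*M. g j) = (\<Sum>t<P. \<Sum>k<M. g (t + P*k))"
proof (induction M)
  case 0 then show ?case by simp
next
  case (Suc M)
  have "(\<Sum>j<P*Suc M. g j) = (\<Sum>j\<in>{0..<P*M}. g j) + (\<Sum>j\<in>{P*M..<P*M+P}. g j)"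
    by (subst sum.atLeastLessThan_concat) (auto simp: lessThan_atLeast0 algebra_simps)
  also have "(\<Sum>j\<in>{P*M..<P*M+P}. g j) = (\<Sum>t<P. g (t + P*M))"
    using sum.shift_bounds_nat_ivl[of g 0 "P*M" P] by (simp add: lessThan_atLeast0 add.commute)
  finally show ?case using Suc by (simp add: lessThan_atLeast0[symmetric] sum.distrib)
qed

lemma exp_om:
  assumes "n = int (P^2)" "P > 0"
  shows "exp (2 * pi * \<i> * of_int s / of_int n) = om (P^2) ^ nat (s mod n)"
proof -
  have n0: "n > 0" using assms by simp
  have e1: "(of_int s :: complex) = of_int n * of_int (s div n) + of_int (s mod n)"
    by (metis mult_div_mod_eq of_int_add of_int_mult)
  have e2: "(of_int (s mod n)::complex) = of_nat (nat (s mod n))" using n0 by simp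
  have e3: "(of_int n :: complex) = of_nat (P^2)" using assms by simp
  have P2: "(of_nat (P^2) :: complex) \<noteq> 0" using assms by simp
  have "2 * pi * \<i> * of_int s / of_int n
      = (2 * of_int (s div n) * pi) * \<i> + of_nat (nat (s mod n)) * (2 * pi * \<i> / of_nat (P^2))"
    unfolding e1 e2[symmetric] e3 using P2 by (simp add: field_simps)
  then have "exp (2 * pi * \<i> * of_int s / of_int n)
     = exp ((2 * of_int (s div n) * pi) * \<i>) * exp (of_nat (nat (s mod n)) * (2 * pi * \<i> / of_nat (P^2)))"
    by (simp add: exp_add)
  also have "exp ((2 * of_int (s div n) * pi) * \<i>) = 1"
    by (rule exp_integer_2pi) simp
  finally show ?thesis unfolding om_def exp_of_nat_mult by simp
qed

lemma hp_mem:
  fixes p x :: int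
  assumes p0: "p > 0" and d: "p dvd x"
  shows "\<exists>j. x mod p^2 = p*j \<and> 0 \<le> j \<and> j < p"
proof -
  have "p dvd x mod p^2" using d by (simp add: dvd_mod_iff power2_eq_square)
  then obtain j where j: "x mod p^2 = p * j" by blast
  have "0 \<le> p * j" using j[symmetric] p0 by simp
  then have "0 \<le> j" using p0 by (simp add: zero_le_mult_iff)
  moreover have "p * j < p * p" using j[symmetric] p0 by (simp add: power2_eq_square)
  then have "j < p" using p0 by simp
  ultimately show ?thesis using j by blast
qed

lemma inj_modp:
  fixes p :: int
  assumes p: "prime p" and c: "complements (p^2) A (pH p)" and a: "a \<in> A" "a' \<in> A"
   and d1: "p dvd fst a - fst a'" and d2: "p dvd snd a - snd a'"
  shows "a = a'"
proof -
  define n where "n = p^2"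
  have p0: "p > 0" using p prime_gt_0_int by blast
  have n0: "n > 0" unfolding n_def using p0 by simp
  have AZ: "A \<subseteq> ZnZn n" and uq: "\<forall>g\<in>ZnZn n. \<exists>!ah. ah \<in> A \<times> pH p \<and> g = zadd n (fst ah) (snd ah)"
    using c unfolding complements_def n_def by auto
  have aZ: "a \<in> ZnZn n" using AZ a by auto
  define h where "h = ((fst a - fst a') mod n, (snd a - snd a') mod n)"
  have z: "((0::int), (0::int)) \<in> pH p" unfolding pH_def using p0
    by (intro CollectI exI[of _ 0]) auto
  obtain j where j: "(fst a - fst a') mod n = p*j" "0 \<le> j" "j < p" using hp_mem[OF p0 d1] n_def by blast
  obtain k where k: "(snd a - snd a') mod n = p*k" "0 \<le> k" "k < p" using hp_mem[OF p0 d2] n_def by blast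
  have hH: "h \<in> pH p" unfolding pH_def h_def using j k by blast
  have e1: "zadd n a (0,0) = a" using aZ unfolding zadd_def ZnZn_def by (cases a) auto
  have e2: "zadd n a' h = a" using aZ unfolding zadd_def ZnZn_def h_def
    by (cases a) (auto simp: mod_add_right_eq)
  have "(a, (0,0)) = (a', h)"
    using uq aZ e1 e2 z hH a by (metis (no_types, lifting) SigmaI fst_conv snd_conv)
  then show ?thesis by simp
qed



lemma om_sum0:
  assumes "P > (1::nat)"
  shows "(\<Sum>k<P. om (P^2) ^ (t + P*k)) = 0"
proof -
  have "om (P^2) ^ P = om P" using om_pow[of P P] assms by (simp add: power2_eq_square)
  then have "(\<Sum>k<P. om (P^2) ^ (t + P*k)) = om (P^2) ^ t * (\<Sum>k<P. om P ^ k)"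
    by (simp add: sum_distrib_left power_add power_mult)
  also have "(\<Sum>k<P. om P ^ k) = 0"
  proof -
    have "om P ^ P - 1 = (om P - 1) * (\<Sum>k<P. om P ^ k)" by (rule power_diff_1_eq)
    then show ?thesis using om_pow_self[of P] om_ne1[of P] assms by simp
  qed
  finally show ?thesis by simp
qed

lemma sum_count:
  fixes e :: "'a \<Rightarrow> nat" and z :: complex
  assumes "finite A" "\<And>a. a \<in> A \<Longrightarrow> e a < M"
  shows "(\<Sum>a\<in>A. z ^ e a) = (\<Sum>j<M. of_nat (card {a\<in>A. e a = j}) * z ^ j)"
proof -
  have "(\<Sum>a\<in>A. z ^ e a) = (\<Sum>a\<in>A. \<Sum>j<M. if e a = j then z ^ j else 0)"
    using assms(2) by (intro sum.cong) (auto simp: sum.delta)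
  also have "\<dots> = (\<Sum>j<M. \<Sum>a\<in>A. if e a = j then z ^ j else 0)" by (rule sum.swap)
  also have "\<dots> = (\<Sum>j<M. of_nat (card {a\<in>A. e a = j}) * z ^ j)"
    using assms(1) by (intro sum.cong) (auto simp: sum.inter_filter[symmetric])
  finally show ?thesis .
qed

theorem mainTheorem3:
  fixes p :: int and A :: "(int \<times> int) set"
  assumes "prime p"
    and "complements (p ^ 2) A (pH p)"
  shows "diff_set (p ^ 2) A \<inter> zero_set (p ^ 2) A = {}"
proof (rule ccontr)
  assume "diff_set (p ^ 2) A \<inter> zero_set (p ^ 2) A \<noteq> {}"
  then obtain \<xi> where xd: "\<xi> \<in> diff_set (p ^ 2) A" and xz: "\<xi> \<in> zero_set (p ^ 2) A" by blast
  define n where "n = p^2"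
  define P where "P = nat p"
  have p0: "p > 0" using assms(1) prime_gt_0_int by blast
  have pP: "p = int P" unfolding P_def using p0 by simp
  have Pp: "prime P" using assms(1) unfolding pP by simp
  have P1: "P > 1" using Pp prime_gt_1_nat[of P] by auto
  have nP: "n = int (P^2)" unfolding n_def pP by simp
  have pn: "p dvd n" unfolding n_def by (simp add: power2_eq_square)
  obtain a0 a0' where a0: "a0 \<in> A" "a0' \<in> A" "a0 \<noteq> a0'" and xi: "\<xi> = zsub n a0 a0'"
    using xd unfolding diff_set_def n_def by blast
  have AZ: "A \<subseteq> ZnZn n" using assms(2) unfolding complements_def n_def by auto
  have finA: "finite A" using AZ unfolding ZnZn_def by (rule finite_subset) auto
  define u where "u = fst \<xi>"
  define w where "w = snd \<xi>"
  have u: "u = (fst a0 - fst a0') mod n" and w: "w = (snd a0 - snd a0') mod n"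
    unfolding u_def w_def xi zsub_def by auto
  have nd: "\<not> (p dvd u \<and> p dvd w)"
  proof
    assume "p dvd u \<and> p dvd w"
    then have "p dvd fst a0 - fst a0'" "p dvd snd a0 - snd a0'" using pn u w
      by (auto simp: dvd_mod_iff)
    then show False using inj_modp[OF assms(1) assms(2) a0(1) a0(2)] a0(3) by blast
  qed
  define e where "e a = nat (symp a \<xi> mod n)" for a
  have n0: "n > 0" unfolding n_def using p0 by simp
  have e_int: "int (e a) = symp a \<xi> mod n" for a unfolding e_def using n0 by simp
  have e_lt: "e a < P * P" for a
  proof -
    have "int (e a) < n" using e_int[of a] n0 by simp
    then have "int (e a) < int (P * P)" unfolding nP by (simp add: power2_eq_square)
    then show ?thesis by linarith
  qed
  have ft: "sym_ft n A \<xi> = (\<Sum>a\<in>A. om (P^2) ^ e a)"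
    unfolding sym_ft_def e_def using exp_om[OF nP] P1 by simp
  define cnt where "cnt j = card {a\<in>A. e a = j}" for j
  have "(\<Sum>j<P*P. of_nat (cnt j) * om (P^2) ^ j) = 0"
    using xz ft sum_count[OF finA e_lt, of "om (P^2)"] unfolding zero_set_def n_def cnt_def by simp
  then have S0: "(\<Sum>t<P. \<Sum>k<P. of_nat (cnt (t + P*k)) * om (P^2) ^ (t + P*k)) = 0"
    unfolding sum_pairs .
  define f where "f j = int (cnt j) - int (cnt (j mod P + P*(P-1)))" for j
  have inner: "(\<Sum>k<P-1. of_int (f (t + P*k)) * om (P^2) ^ (t + P*k))
      = (\<Sum>k<P. of_nat (cnt (t + P*k)) * om (P^2) ^ (t + P*k))" if t: "t < P" for t
  proof -
    have md: "(t + P*k) mod P = t" for k using t by simp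
    have tm: "t mod P = t" using t by simp
    have "(\<Sum>k<P. of_int (f (t + P*k)) * om (P^2) ^ (t + P*k))
       = (\<Sum>k<P. of_nat (cnt (t + P*k)) * om (P^2) ^ (t + P*k))
         - of_nat (cnt (t + P*(P-1))) * (\<Sum>k<P. om (P^2) ^ (t + P*k))"
      by (simp add: f_def md tm sum_distrib_left sum_subtractf algebra_simps)
    also have "(\<Sum>k<P. om (P^2) ^ (t + P*k)) = 0" using om_sum0[OF P1] .
    finally have "(\<Sum>k<P. of_int (f (t + P*k)) * om (P^2) ^ (t + P*k))
       = (\<Sum>k<P. of_nat (cnt (t + P*k)) * om (P^2) ^ (t + P*k))" by simp
    moreover have "(\<Sum>k<P. of_int (f (t + P*k)) * om (P^2) ^ (t + P*k))
       = (\<Sum>k<P-1. of_int (f (t + P*k)) * om (P^2) ^ (t + P*k))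
         + of_int (f (t + P*(P-1))) * om (P^2) ^ (t + P*(P-1))"
      using P1 by (cases P) auto
    moreover have "f (t + P*(P-1)) = 0" unfolding f_def using md by simp
    ultimately show ?thesis by simp
  qed
  have "(\<Sum>j<P*(P-1). of_int (f j) * om (P^2) ^ j) = (0::complex)"
    unfolding sum_pairs using S0 inner by simp
  then have fz: "f j = 0" if "j < P^2 - P" for j
    using LI[OF Pp, of f j] that by (simp add: power2_eq_square algebra_simps)
  define e0 where "e0 = e a0"
  have ee: "e a0' = e0"
  proof -
    have "n dvd (fst a0 - fst a0' - u)" unfolding u by (simp add: mod_eq_dvd_iff[symmetric] mod_diff_eq)
    moreover have "n dvd (snd a0 - snd a0' - w)" unfolding w by (simp add: mod_eq_dvd_iff[symmetric] mod_diff_eq)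
    ultimately have "n dvd (fst a0 - fst a0' - u) * w - (snd a0 - snd a0' - w) * u"
      by (simp add: dvd_diff dvd_mult2)
    moreover have "symp a0 \<xi> - symp a0' \<xi> = (fst a0 - fst a0' - u) * w - (snd a0 - snd a0' - w) * u"
      unfolding symp_def u_def w_def by (simp add: algebra_simps)
    ultimately have "symp a0 \<xi> mod n = symp a0' \<xi> mod n" by (simp add: mod_eq_dvd_iff)
    then show ?thesis unfolding e0_def e_def by simp
  qed
  define t0 where "t0 = e0 mod P"
  have t0P: "t0 < P" unfolding t0_def using P1 by simp
  have e0eq: "e0 = t0 + P * (e0 div P)" unfolding t0_def by simp
  have k0: "e0 div P < P" using e_lt[of a0] P1 unfolding e0_def
    by (simp add: less_mult_imp_div_less)
  have ceq: "cnt (t0 + P*k) = cnt e0" if k: "k < P" for k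
  proof -
    have "cnt j = cnt (t0 + P*(P-1))" if "j = t0 + P*k'" "k' < P" for j k'
    proof (cases "k' = P - 1")
      case True then show ?thesis using that by simp
    next
      case False
      then have "k' + 1 \<le> P - 1" using that by linarith
      then have "P*(k' + 1) \<le> P*(P-1)" by (rule mult_le_mono2)
      then have "P*k' + P \<le> P*(P-1)" by (simp add: algebra_simps)
      then have "j < P^2 - P" using that t0P by (simp add: power2_eq_square algebra_simps)
      then have "f j = 0" by (rule fz)
      moreover have "j mod P = t0" using that t0P by simp
      ultimately show ?thesis unfolding f_def by simp
    qed
    then show ?thesis using k k0 e0eq by metis
  qed
  have c2: "cnt e0 \<ge> 2"
  proof -
    have "{a0, a0'} \<subseteq> {a\<in>A. e a = e0}" using a0 ee e0_def by auto
    moreover have "finite {a\<in>A. e a = e0}" using finA by simp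
    ultimately have "card {a0, a0'} \<le> cnt e0" unfolding cnt_def by (rule card_mono[rotated])
    then show ?thesis using a0(3) by simp
  qed
  define Cl where "Cl = {a\<in>A. e a mod P = t0}"
  have Cl_eq: "Cl = (\<Union>k\<in>{..<P}. {a\<in>A. e a = t0 + P*k})"
  proof (rule set_eqI, rule iffI)
    fix a assume "a \<in> Cl"
    then have "a \<in> A" "e a mod P = t0" unfolding Cl_def by auto
    moreover have "e a div P < P" using e_lt[of a] P1 by (simp add: less_mult_imp_div_less)
    moreover have "e a = t0 + P * (e a div P)" using mod_mult_div_eq[of "e a" P] \<open>e a mod P = t0\<close> by linarith
    ultimately show "a \<in> (\<Union>k\<in>{..<P}. {a\<in>A. e a = t0 + P*k})" by blast
  next
    fix a assume "a \<in> (\<Union>k\<in>{..<P}. {a\<in>A. e a = t0 + P*k})"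
    then show "a \<in> Cl" unfolding Cl_def using t0P by auto
  qed
  have "card Cl = (\<Sum>k<P. cnt (t0 + P*k))"
    unfolding Cl_eq cnt_def using finA P1
    by (subst card_UN_disjoint) auto
  also have "\<dots> = P * cnt e0" using ceq by simp
  finally have cardCl: "card Cl = P * cnt e0" .
  define phi where "phi a = (if \<not> p dvd u then fst a mod p else snd a mod p)" for a :: "int \<times> int"
  have "inj_on phi Cl"
  proof (rule inj_onI)
    fix a a' assume a: "a \<in> Cl" and a': "a' \<in> Cl" and ph: "phi a = phi a'"
    have AA: "a \<in> A" "a' \<in> A" using a a' unfolding Cl_def by auto
    have "e a mod P = e a' mod P" using a a' unfolding Cl_def by auto
    then have "int (e a) mod p = int (e a') mod p" unfolding pP by (simp flip: of_nat_mod)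
    then have "symp a \<xi> mod p = symp a' \<xi> mod p" unfolding e_int using pn by (simp add: mod_mod_cancel)
    then have "p dvd symp a \<xi> - symp a' \<xi>" by (simp add: mod_eq_dvd_iff)
    moreover have "symp a \<xi> - symp a' \<xi> = (fst a - fst a') * w - (snd a - snd a') * u"
      unfolding symp_def u_def w_def by (simp add: algebra_simps)
    ultimately have dd: "p dvd (fst a - fst a') * w - (snd a - snd a') * u" by simp
    show "a = a'"
    proof (cases "p dvd u")
      case False
      then have "fst a mod p = fst a' mod p" using ph unfolding phi_def by simp
      then have d1: "p dvd fst a - fst a'" by (simp add: mod_eq_dvd_iff)
      then have "p dvd (fst a - fst a') * w" by simp
      from dvd_diff[OF this dd] have "p dvd (snd a - snd a') * u" by simp
      then have "p dvd snd a - snd a'" using False assms(1) by (simp add: prime_dvd_mult_iff)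
      then show ?thesis using inj_modp[OF assms(1,2) AA] d1 by blast
    next
      case True
      then have nw: "\<not> p dvd w" using nd by blast
      have "snd a mod p = snd a' mod p" using ph True unfolding phi_def by simp
      then have d2: "p dvd snd a - snd a'" by (simp add: mod_eq_dvd_iff)
      then have "p dvd (snd a - snd a') * u" by simp
      from dvd_add[OF dd this] have "p dvd (fst a - fst a') * w" by simp
      then have "p dvd fst a - fst a'" using nw assms(1) by (simp add: prime_dvd_mult_iff)
      then show ?thesis using inj_modp[OF assms(1,2) AA] d2 by blast
    qed
  qed
  moreover have "phi ` Cl \<subseteq> {0..<p}" unfolding phi_def using p0 by auto
  ultimately have "card Cl \<le> card {0..<p}" by (intro card_inj_on_le) auto
  then have "card Cl \<le> P" unfolding pP by simp
  moreover have "P * 2 \<le> P * cnt e0" using c2 by simp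
  ultimately show False using cardCl P1 by linarith
qed


end
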